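(* For every $n\in\mathbb{N}$ there is a constant $c=c(n,\alpha,C_1)$ such that for every $\delta\in(0,\delta_0]$ and $t>0$, $$\int_{\mathbb{R}^n}e^{-t\psi^{(\delta)}(|\xi|)}d\xi\le c\,e^{h(\delta)t}\frac{1}{\big(h^{-1}(1/t)\big)^n}.$$
   Context: Let $\nu$ be a symmetric density of an infinite Lévy measure on $\mathbb{R}$ (with $\int(x^2\wedge1)\nu<\infty$), such that for some $\eta_4>0$, $\nu\in C^1(0,\eta_4)$, $\nu'<0$ and $-\nu'(x)/x$ decreasing on $(0,\eta_4)$. Let $\psi(\xi)=\int(1-\cos(\xi x))\nu(x)dx$ satisfy $\psi(\lambda\theta)\ge\underline{C}\lambda^\alpha\psi(\theta)$ for $\lambda\ge1,\theta\ge0$ and $\psi(\lambda\theta)\le\overline{C}\lambda^\beta\psi(\theta)$ for $\lambda\ge1,\theta\ge1$, with $0<\alpha\le\beta<2$. Put $C_1=\underline{C}/\pi^2$; $h(r)=\int(1\wedge x^2r^{-2})\nu(x)dx$ for $r>0$ (continuous, strictly decreasing from $\infty$ to $0$), $h^{-1}$ its inverse. Truncation: there is $\delta_0\in(0,1/24]$ such that for each $\delta\in(0,\delta_0]$ one fixes $\mu^{(\delta)}:\mathbb{R}\setminus\{0\}\to[0,\infty)$ with $\mu^{(\delta)}=\nu$ on $(0,\delta]$, $\mu^{(\delta)}\in[0,\nu]$ on $(\delta,2\delta)$, $\mu^{(\delta)}=0$ on $[2\delta,\infty)$, $\mu^{(\delta)}\in C^1(0,\infty)$, nonincreasing on $(0,\infty)$,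 $-(\mu^{(\delta)})'(x)/x$ nonincreasing, and symmetric. $\psi^{(\delta)}(\xi)=\int(1-\cos(\xi x))\mu^{(\delta)}(x)dx$. *)

theory Defs
  imports "HOL-Analysis.Analysis"
begin

definition levy_exp :: "(real \<Rightarrow> real) \<Rightarrow> real \<Rightarrow> real" where
  "levy_exp f \<xi> = (\<integral>x. (1 - cos (\<xi> * x)) * f x \<partial>lborel)"

definition levy_h :: "(real \<Rightarrow> real) \<Rightarrow> real \<Rightarrow> real" where
  "levy_h f r = (\<integral>x. min 1 (x\<^sup>2 / r\<^sup>2) * f x \<partial>lborel)"

text \<open>Inverse of h on (0,oo) (h is a continuous strictly decreasing bijection
  (0,oo) -> (0,oo) under the standing assumptions).\<close>
definition levy_h_inv :: "(real \<Rightarrow> real) \<Rightarrow> real \<Rightarrow> real" where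
  "levy_h_inv f s = (THE r. 0 < r \<and> levy_h f r = s)"

definition std_levy_assms ::
  "(real \<Rightarrow> real) \<Rightarrow> real \<Rightarrow> real \<Rightarrow> real \<Rightarrow> real \<Rightarrow> real \<Rightarrow> bool" where
  "std_levy_assms \<nu> \<eta>4 \<alpha> \<beta> Cl Cu \<longleftrightarrow>
     \<nu> \<in> borel_measurable borel \<and>
     (\<forall>x. 0 \<le> \<nu> x) \<and>
     (\<forall>x. \<nu> (- x) = \<nu> x) \<and>
     (\<integral>\<^sup>+ x. ennreal (min (x\<^sup>2) 1 * \<nu> x) \<partial>lborel) < \<infinity> \<and>
     (\<integral>\<^sup>+ x. ennreal (\<nu> x) \<partial>lborel) = \<infinity> \<and>
     0 < \<eta>4 \<and>
     (\<forall>x\<in>{0<..<\<eta>4}. \<nu> differentiable at x) \<and>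
     continuous_on {0<..<\<eta>4} (deriv \<nu>) \<and>
     (\<forall>x\<in>{0<..<\<eta>4}. deriv \<nu> x < 0) \<and>
     (\<forall>x\<in>{0<..<\<eta>4}. \<forall>y\<in>{0<..<\<eta>4}. x \<le> y \<longrightarrow>
         - deriv \<nu> y / y \<le> - deriv \<nu> x / x) \<and>
     0 < \<alpha> \<and> \<alpha> \<le> \<beta> \<and> \<beta> < 2 \<and> 0 < Cl \<and> 0 < Cu \<and>
     (\<forall>l \<theta>. 1 \<le> l \<longrightarrow> 0 \<le> \<theta> \<longrightarrow>
         levy_exp \<nu> (l * \<theta>) \<ge> Cl * l powr \<alpha> * levy_exp \<nu> \<theta>) \<and>
     (\<forall>l \<theta>. 1 \<le> l \<longrightarrow> 1 \<le> \<theta> \<longrightarrow>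
         levy_exp \<nu> (l * \<theta>) \<le> Cu * l powr \<beta> * levy_exp \<nu> \<theta>)"

definition truncation_family ::
  "(real \<Rightarrow> real) \<Rightarrow> real \<Rightarrow> (real \<Rightarrow> real \<Rightarrow> real) \<Rightarrow> bool" where
  "truncation_family \<nu> \<delta>0 \<mu> \<longleftrightarrow>
     0 < \<delta>0 \<and> \<delta>0 \<le> 1/24 \<and>
     (\<forall>\<delta>\<in>{0<..\<delta>0}.
        (\<forall>x\<in>{0<..\<delta>}. \<mu> \<delta> x = \<nu> x) \<and>
        (\<forall>x\<in>{\<delta><..<2*\<delta>}. 0 \<le> \<mu> \<delta> x \<and> \<mu> \<delta> x \<le> \<nu> x) \<and>
        (\<forall>x\<in>{2*\<delta>..}. \<mu> \<delta> x = 0) \<and>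
        (\<forall>x\<in>{0<..}. \<mu> \<delta> differentiable at x) \<and>
        continuous_on {0<..} (deriv (\<mu> \<delta>)) \<and>
        (\<forall>x\<in>{0<..}. \<forall>y\<in>{0<..}. x \<le> y \<longrightarrow> \<mu> \<delta> y \<le> \<mu> \<delta> x) \<and>
        (\<forall>x\<in>{0<..}. \<forall>y\<in>{0<..}. x \<le> y \<longrightarrow>
            - deriv (\<mu> \<delta>) y / y \<le> - deriv (\<mu> \<delta>) x / x) \<and>
        (\<forall>x. x \<noteq> 0 \<longrightarrow> \<mu> \<delta> (- x) = \<mu> \<delta> x))"

end

theory Submission
  imports Defs
begin


lemma one_minus_cos_upper: "1 - cos (v::real) \<le> 2 * min 1 (v\<^sup>2)"
proof -
  have a: "1 - cos v = 2 * (sin (v/2))\<^sup>2"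
    using cos_double_sin[of "v/2"] by simp
  have "\<bar>sin (v/2)\<bar> \<le> \<bar>v/2\<bar>" by (rule abs_sin_x_le_abs_x)
  hence "(sin (v/2))\<^sup>2 \<le> (v/2)\<^sup>2"
    by (metis abs_ge_zero power2_abs power_mono)
  hence "(sin (v/2))\<^sup>2 * 4 \<le> v\<^sup>2" by (simp add: power_divide)
  hence b: "1 - cos v \<le> v\<^sup>2" using a zero_le_power2[of "sin (v/2)"] by linarith
  have c: "1 - cos v \<le> 2" using cos_ge_minus_one[of v] by linarith
  have d: "0 \<le> v\<^sup>2" by simp
  show ?thesis
  proof (cases "1 \<le> v\<^sup>2")
    case True thus ?thesis using c by (simp add: min_def)
  next
    case False hence "min 1 (v\<^sup>2) = v\<^sup>2" by (simp add: min_def)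
    thus ?thesis using b d by linarith
  qed
qed

lemma F3: "fact 3 = (6::real)" by (simp add: numeral_3_eq_3)

lemma sin_lower: "\<bar>sin (u::real)\<bar> \<ge> \<bar>u\<bar> - \<bar>u\<bar>^3 / 6"
proof -
  have "\<bar>sin u - (\<Sum>m<3. sin_coeff m * u ^ m)\<bar> \<le> inverse (fact 3) * \<bar>u\<bar> ^ 3"
    by (rule Maclaurin_sin_bound)
  moreover have "(\<Sum>m<3. sin_coeff m * u ^ m) = u"
    by (simp add: numeral_3_eq_3 sin_coeff_def)
  moreover have "inverse (fact 3) * \<bar>u\<bar> ^ 3 = \<bar>u\<bar>^3 / (6::real)"
    unfolding F3 by simp
  ultimately have "\<bar>sin u - u\<bar> \<le> \<bar>u\<bar>^3 / 6"
    by simp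
  thus ?thesis by linarith
qed

lemma one_minus_cos_lower: assumes "\<bar>v\<bar> \<le> 1" shows "1 - cos (v::real) \<ge> v\<^sup>2 / 4"
proof -
  have a: "1 - cos v = 2 * (sin (v/2))\<^sup>2"
    using cos_double_sin[of "v/2"] by simp
  define u where "u = \<bar>v/2\<bar>"
  have u: "0 \<le> u" "u \<le> 1/2" using assms by (auto simp: u_def)
  have "u^3 \<le> u * (1/2)^2" using u
    by (metis mult_left_mono power2_eq_square power3_eq_cube power_mono mult.assoc mult.commute) 
  hence "u - u^3/6 \<ge> u * (23/24)" by (simp add: power2_eq_square)
  moreover have "\<bar>sin (v/2)\<bar> \<ge> u - u^3/6" using sin_lower[of "v/2"] by (simp add: u_def)
  ultimately have s: "\<bar>sin (v/2)\<bar> \<ge> u * (23/24)" by linarith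
  have "(u*(23/24))\<^sup>2 \<le> (sin (v/2))\<^sup>2"
    using s u by (metis abs_ge_zero power2_abs power_mono mult_nonneg_nonneg zero_le_divide_iff zero_le_numeral)
  moreover have "u\<^sup>2 = v\<^sup>2/4" by (simp add: u_def power2_eq_square)
  moreover have "(u*(23/24))\<^sup>2 = u\<^sup>2 * (529/576)" by (simp add: power_mult_distrib power2_eq_square)
  ultimately show ?thesis using a zero_le_power2[of v] by linarith
qed


lemma ennreal_term_le_suminf: "(f k :: ennreal) \<le> (\<Sum>i. f i)"
proof -
  have "sum f {k} \<le> suminf f" by (rule sum_le_suminf) auto
  thus ?thesis by simp
qed

lemma ennreal_le_mult_helper:
  "x \<le> c * y \<Longrightarrow> 0 \<le> c \<Longrightarrow> 0 \<le> y \<Longrightarrow> ennreal x \<le> ennreal c * ennreal y"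
  by (metis ennreal_leI ennreal_mult)

lemma dyadic_pointwise:
  "ennreal (min 1 (v\<^sup>2)) \<le> 16 * (\<Sum>k. ennreal (1 - cos (v / 2^k)))"
proof (cases "\<bar>v\<bar> \<le> 1")
  case True
  have "min 1 (v\<^sup>2) \<le> 16 - 16 * cos v"
    using one_minus_cos_lower[OF True] cos_le_one[of v] min.cobounded2[of 1 "v\<^sup>2"] by linarith
  hence "min 1 (v\<^sup>2) \<le> 16 * (1 - cos (v / 2^0))" by simp
  hence "ennreal (min 1 (v\<^sup>2)) \<le> ennreal 16 * ennreal (1 - cos (v / 2^0))"
    by (intro ennreal_le_mult_helper) (auto simp: algebra_simps)
  hence "ennreal (min 1 (v\<^sup>2)) \<le> 16 * ennreal (1 - cos (v / 2^0))" by simp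
  also have "\<dots> \<le> 16 * (\<Sum>k. ennreal (1 - cos (v / 2^k)))"
    by (intro mult_left_mono ennreal_term_le_suminf) auto
  finally show ?thesis .
next
  case False
  have ex: "\<exists>k::nat. \<bar>v\<bar> \<le> 2^k"
    using real_arch_pow[of 2 "\<bar>v\<bar>"] by (auto intro: less_imp_le)
  define k where "k = (LEAST k::nat. \<bar>v\<bar> \<le> 2^k)"
  have k1: "\<bar>v\<bar> \<le> 2^k" unfolding k_def by (rule LeastI_ex[OF ex])
  have k0: "k \<noteq> 0" using False k1 by (intro notI) simp
  have k2: "\<not> \<bar>v\<bar> \<le> 2^(k-1)"
    unfolding k_def by (rule not_less_Least) (use k0 k_def in auto)
  have p: "(2::real)^k = 2 * 2^(k-1)" using k0 by (cases k) auto
  define w where "w = v / 2^k"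
  have w1: "\<bar>w\<bar> \<le> 1" using k1 by (simp add: w_def abs_divide)
  have w2: "\<bar>w\<bar> \<ge> 1/2" using k2 p by (simp add: w_def abs_divide field_simps)
  have "w\<^sup>2 \<ge> (1/2)\<^sup>2" using w2
    by (metis abs_ge_zero power2_abs power_mono zero_le_divide_iff zero_le_one zero_le_numeral)
  hence "1 - cos w \<ge> 1/16" using one_minus_cos_lower[OF w1] by (simp add: power2_eq_square)
  hence "1 \<le> 16 - 16 * cos w" by linarith
  hence "min 1 (v\<^sup>2) \<le> 16 - 16 * cos w" using min.cobounded1[of 1 "v\<^sup>2"] by linarith
  hence "min 1 (v\<^sup>2) \<le> 16 * (1 - cos (v / 2^k))" unfolding w_def by (simp add: algebra_simps)
  hence "ennreal (min 1 (v\<^sup>2)) \<le> ennreal 16 * ennreal (1 - cos (v / 2^k))"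
    by (intro ennreal_le_mult_helper) auto
  hence "ennreal (min 1 (v\<^sup>2)) \<le> 16 * ennreal (1 - cos (v / 2^k))" by simp
  also have "\<dots> \<le> 16 * (\<Sum>k. ennreal (1 - cos (v / 2^k)))"
    by (intro mult_left_mono ennreal_term_le_suminf) auto
  finally show ?thesis .
qed



lemma min_scale: fixes a b :: real assumes "0 \<le> a" "0 \<le> b" shows "min 1 (a * b) \<le> max 1 a * min b 1"
proof (cases "b \<le> 1")
  case True
  have "a * b \<le> max 1 a * b" using assms by (intro mult_right_mono) auto
  thus ?thesis using True by (simp add: min_def)
next
  case False
  hence "min b 1 = 1" by simp
  moreover have "min 1 (a * b) \<le> 1" by simp
  moreover have "1 \<le> max 1 a" by simp
  ultimately show ?thesis by simp
qed

lemma cos_dom: fixes \<xi> x :: real shows "1 - cos (\<xi> * x) \<le> (2 * max 1 (\<xi>\<^sup>2)) * min (x\<^sup>2) 1"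
proof -
  have "1 - cos (\<xi> * x) \<le> 2 * min 1 ((\<xi>*x)\<^sup>2)" by (rule one_minus_cos_upper)
  also have "min 1 ((\<xi>*x)\<^sup>2) \<le> max 1 (\<xi>\<^sup>2) * min (x\<^sup>2) 1"
    unfolding power_mult_distrib by (rule min_scale) auto
  finally show ?thesis by simp
qed

lemma h_dom: fixes r x :: real assumes "0 < r" shows "min 1 (x\<^sup>2 / r\<^sup>2) \<le> max 1 (1 / r\<^sup>2) * min (x\<^sup>2) 1"
proof -
  have "min 1 (x\<^sup>2 / r\<^sup>2) = min 1 ((1 / r\<^sup>2) * x\<^sup>2)" by (simp add: field_simps)
  also have "\<dots> \<le> max 1 (1 / r\<^sup>2) * min (x\<^sup>2) 1" by (rule min_scale) auto
  finally show ?thesis .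
qed

locale levy_base =
  fixes \<nu> :: "real \<Rightarrow> real"
  assumes meas[measurable]: "\<nu> \<in> borel_measurable borel"
  and nonneg: "\<And>x. 0 \<le> \<nu> x"
  and fin: "(\<integral>\<^sup>+ x. ennreal (min (x\<^sup>2) 1 * \<nu> x) \<partial>lborel) < \<infinity>"
begin

lemma integrable_dom:
  assumes [measurable]: "g \<in> borel_measurable borel" and g0: "\<And>x. 0 \<le> g x"
    and gC: "\<And>x. g x \<le> C * min (x\<^sup>2) 1"
  shows "integrable lborel (\<lambda>x. g x * \<nu> x)"
proof (rule integrableI_nonneg)
  show "AE x in lborel. 0 \<le> g x * \<nu> x" using g0 nonneg by simp
  have C0: "0 \<le> C" using g0[of 1] gC[of 1] by simp
  have "(\<integral>\<^sup>+ x. ennreal (g x * \<nu> x) \<partial>lborel) \<le> (\<integral>\<^sup>+ x. ennreal C * ennreal (min (x\<^sup>2) 1 * \<nu> x) \<partial>lborel)"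
  proof (rule nn_integral_mono)
    fix x
    have "g x * \<nu> x \<le> C * (min (x\<^sup>2) 1 * \<nu> x)"
      using mult_right_mono[OF gC[of x] nonneg[of x]] by (simp add: mult.assoc)
    thus "ennreal (g x * \<nu> x) \<le> ennreal C * ennreal (min (x\<^sup>2) 1 * \<nu> x)"
      using C0 nonneg[of x] by (intro ennreal_le_mult_helper) auto
  qed
  also have "\<dots> = ennreal C * (\<integral>\<^sup>+ x. ennreal (min (x\<^sup>2) 1 * \<nu> x) \<partial>lborel)"
    by (rule nn_integral_cmult) auto
  also have "\<dots> < \<infinity>" using fin by (simp add: ennreal_mult_less_top)
  finally show "(\<integral>\<^sup>+ x. ennreal (g x * \<nu> x) \<partial>lborel) < \<infinity>" .
qed simp

lemma int_psi: "integrable lborel (\<lambda>x. (1 - cos (\<xi> * x)) * \<nu> x)"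
  by (rule integrable_dom[OF _ _ cos_dom]) auto

lemma int_h: "0 < r \<Longrightarrow> integrable lborel (\<lambda>x. min 1 (x\<^sup>2 / r\<^sup>2) * \<nu> x)"
  by (rule integrable_dom[OF _ _ h_dom]) auto

lemma psi_nn: "ennreal (levy_exp \<nu> \<xi>) = (\<integral>\<^sup>+ x. ennreal ((1 - cos (\<xi> * x)) * \<nu> x) \<partial>lborel)"
  unfolding levy_exp_def
  by (rule nn_integral_eq_integral[symmetric, OF int_psi]) (simp add: nonneg)

lemma h_nn: "0 < r \<Longrightarrow> ennreal (levy_h \<nu> r) = (\<integral>\<^sup>+ x. ennreal (min 1 (x\<^sup>2 / r\<^sup>2) * \<nu> x) \<partial>lborel)"
  unfolding levy_h_def
  by (rule nn_integral_eq_integral[symmetric, OF int_h]) (simp_all add: nonneg)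

lemma psi_nonneg: "0 \<le> levy_exp \<nu> \<xi>"
  unfolding levy_exp_def by (rule integral_nonneg_AE) (simp add: nonneg)

lemma h_nonneg: "0 \<le> levy_h \<nu> r"
  unfolding levy_h_def by (rule integral_nonneg_AE) (simp add: nonneg)

end


lemma pow2_powr_cancel: "((2::real)^k) powr \<alpha> * (2 powr (-\<alpha>))^k = 1"
proof -
  have "((2::real)^k) powr \<alpha> = 2 powr (real k * \<alpha>)"
    by (simp add: powr_realpow[symmetric] powr_powr)
  moreover have "(2 powr (-\<alpha>))^k = (2::real) powr (real k * (-\<alpha>))"
    by (rule powr_power) simp
  ultimately show ?thesis by (simp add: powr_add[symmetric])
qed

locale levy_scal = levy_base +
  fixes \<alpha> Cl :: real
  assumes alpha: "0 < \<alpha>" and Cl: "0 < Cl"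
  and scal: "\<And>l \<theta>. 1 \<le> l \<Longrightarrow> 0 \<le> \<theta> \<Longrightarrow> levy_exp \<nu> (l * \<theta>) \<ge> Cl * l powr \<alpha> * levy_exp \<nu> \<theta>"
begin

definition "q = (2::real) powr (-\<alpha>)"
definition "A = 16 / (Cl * (1 - q))"

lemma q: "0 < q" "q < 1"
  unfolding q_def using alpha by (auto intro: powr_less_one)

lemma A_pos: "0 < A" unfolding A_def using q Cl by auto

lemma psi_dyadic: assumes "0 \<le> \<xi>"
  shows "levy_exp \<nu> (\<xi> / 2^k) \<le> levy_exp \<nu> \<xi> / Cl * q^k"
proof -
  have "Cl * (2^k) powr \<alpha> * levy_exp \<nu> (\<xi> / 2^k) \<le> levy_exp \<nu> (2^k * (\<xi> / 2^k))"
    by (rule scal) (use assms in auto)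
  hence "Cl * (2^k) powr \<alpha> * levy_exp \<nu> (\<xi> / 2^k) \<le> levy_exp \<nu> \<xi>" by simp
  hence "Cl * (2^k) powr \<alpha> * levy_exp \<nu> (\<xi> / 2^k) * q^k \<le> levy_exp \<nu> \<xi> * q^k"
    using q by (intro mult_right_mono) auto
  moreover have "Cl * (2^k) powr \<alpha> * levy_exp \<nu> (\<xi> / 2^k) * q^k = Cl * levy_exp \<nu> (\<xi> / 2^k)"
    using pow2_powr_cancel[of k \<alpha>] unfolding q_def by (simp add: algebra_simps)
  ultimately have "Cl * levy_exp \<nu> (\<xi> / 2^k) \<le> levy_exp \<nu> \<xi> * q^k" by simp
  thus ?thesis using Cl by (simp add: field_simps)
qed

lemma geom_ennreal: "(\<Sum>k. ennreal (q^k)) = ennreal (1 / (1 - q))"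
  by (rule suminf_ennreal_eq) (use q in \<open>auto intro: geometric_sums\<close>)

lemma h_le_psi: assumes "0 < \<xi>" shows "levy_h \<nu> (1/\<xi>) \<le> A * levy_exp \<nu> \<xi>"
proof -
  have "ennreal (levy_h \<nu> (1/\<xi>)) = (\<integral>\<^sup>+ x. ennreal (min 1 (x\<^sup>2 / (1/\<xi>)\<^sup>2) * \<nu> x) \<partial>lborel)"
    using assms by (intro h_nn) simp
  also have "\<dots> = (\<integral>\<^sup>+ x. ennreal (min 1 ((\<xi>*x)\<^sup>2)) * ennreal (\<nu> x) \<partial>lborel)"
  proof (intro nn_integral_cong)
    fix x
    have "x\<^sup>2 / (1/\<xi>)\<^sup>2 = (\<xi>*x)\<^sup>2" using assms by (simp add: power_mult_distrib field_simps)
    thus "ennreal (min 1 (x\<^sup>2 / (1/\<xi>)\<^sup>2) * \<nu> x) = ennreal (min 1 ((\<xi>*x)\<^sup>2)) * ennreal (\<nu> x)"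
      by (simp add: ennreal_mult nonneg)
  qed
  also have "\<dots> \<le> (\<integral>\<^sup>+ x. (16 * (\<Sum>k. ennreal (1 - cos ((\<xi>*x) / 2^k)))) * ennreal (\<nu> x) \<partial>lborel)"
    by (intro nn_integral_mono mult_right_mono dyadic_pointwise) auto
  also have "\<dots> = (\<integral>\<^sup>+ x. (\<Sum>k. 16 * ennreal ((1 - cos ((\<xi> / 2^k) * x)) * \<nu> x)) \<partial>lborel)"
  proof (intro nn_integral_cong)
    fix x
    have e: "16 * ennreal ((1 - cos ((\<xi> / 2^k) * x)) * \<nu> x) = (16 * ennreal (1 - cos ((\<xi>*x) / 2^k))) * ennreal (\<nu> x)" for k
    proof -
      have "(\<xi> / 2^k) * x = (\<xi>*x) / 2^k" by simp
      moreover have "ennreal ((1 - cos ((\<xi>*x) / 2^k)) * \<nu> x) = ennreal (1 - cos ((\<xi>*x) / 2^k)) * ennreal (\<nu> x)"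
        by (rule ennreal_mult) (auto simp: nonneg)
      ultimately show ?thesis by (simp only: mult.assoc)
    qed
    show "16 * (\<Sum>k. ennreal (1 - cos ((\<xi>*x) / 2^k))) * ennreal (\<nu> x) = (\<Sum>k. 16 * ennreal ((1 - cos ((\<xi> / 2^k) * x)) * \<nu> x))"
      by (simp only: e ennreal_suminf_multc ennreal_suminf_cmult)
  qed
  also have "\<dots> = (\<Sum>k. (\<integral>\<^sup>+ x. 16 * ennreal ((1 - cos ((\<xi> / 2^k) * x)) * \<nu> x) \<partial>lborel))"
    by (rule nn_integral_suminf) simp
  also have "\<dots> = (\<Sum>k. 16 * ennreal (levy_exp \<nu> (\<xi> / 2^k)))"
    by (simp add: nn_integral_cmult psi_nn)
  also have "\<dots> \<le> (\<Sum>k. 16 * ennreal (levy_exp \<nu> \<xi> / Cl * q^k))"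
    by (intro suminf_le mult_left_mono ennreal_leI psi_dyadic) (use assms in auto)
  also have "\<dots> = 16 * ennreal (levy_exp \<nu> \<xi> / Cl) * (\<Sum>k. ennreal (q^k))"
  proof -
    have e: "ennreal (levy_exp \<nu> \<xi> / Cl * q^k) = ennreal (levy_exp \<nu> \<xi> / Cl) * ennreal (q^k)" for k
      by (rule ennreal_mult) (use q Cl psi_nonneg in auto)
    show ?thesis by (simp only: e ennreal_suminf_cmult mult.assoc)
  qed
  also have "\<dots> = ennreal (A * levy_exp \<nu> \<xi>)"
  proof -
    have a: "A * levy_exp \<nu> \<xi> = 16 * (levy_exp \<nu> \<xi> / Cl) * (1 / (1 - q))"
      unfolding A_def using q Cl by (simp add: field_simps)
    have m1: "ennreal (16 * (levy_exp \<nu> \<xi> / Cl) * (1 / (1 - q))) = ennreal (16 * (levy_exp \<nu> \<xi> / Cl)) * ennreal (1 / (1 - q))"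
      by (rule ennreal_mult) (use q Cl psi_nonneg in auto)
    have m2: "ennreal (16 * (levy_exp \<nu> \<xi> / Cl)) = ennreal 16 * ennreal (levy_exp \<nu> \<xi> / Cl)"
      by (rule ennreal_mult) (use q Cl psi_nonneg in auto)
    show ?thesis unfolding geom_ennreal a m1 m2 by simp
  qed
  finally show ?thesis using A_pos psi_nonneg by (simp add: ennreal_le_iff)
qed

end


lemma min1_strict: fixes a b :: real shows "a < b \<Longrightarrow> a < 1 \<Longrightarrow> min 1 a < min 1 b"
  by (simp add: min_def)

lemma sq_ge_of_abs: fixes x r :: real shows "r \<le> \<bar>x\<bar> \<Longrightarrow> 0 \<le> r \<Longrightarrow> r\<^sup>2 \<le> x\<^sup>2"
  by (metis power2_abs power_mono)

lemma sq_lt_of_abs: fixes x r :: real shows "\<bar>x\<bar> < r \<Longrightarrow> x\<^sup>2 < r\<^sup>2"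
  by (metis abs_ge_zero power2_abs power_strict_mono zero_less_numeral)

context levy_base
begin

lemma Z:
  assumes inf: "(\<integral>\<^sup>+ x. ennreal (\<nu> x) \<partial>lborel) = \<infinity>"
  assumes [measurable]: "D \<in> borel_measurable borel" and D0: "\<And>x. 0 \<le> D x" and rho: "0 < \<rho>"
    and Dpos: "\<And>x. x \<noteq> 0 \<Longrightarrow> \<bar>x\<bar> < \<rho> \<Longrightarrow> 0 < D x"
    and int: "integrable lborel (\<lambda>x. D x * \<nu> x)"
    and zero: "(\<integral>x. D x * \<nu> x \<partial>lborel) = 0"
  shows False
proof -
  have "AE x in lborel. D x * \<nu> x = 0"
    using integral_nonneg_eq_0_iff_AE[OF int] zero D0 nonneg by simp
  define M where "M = 1 / min (\<rho>\<^sup>2) 1"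
  have m0: "0 < min (\<rho>\<^sup>2) 1" using rho by simp
  have M0: "0 < M" using m0 unfolding M_def by simp
  have "AE x in lborel. ennreal (\<nu> x) \<le> ennreal M * ennreal (min (x\<^sup>2) 1 * \<nu> x)"
    using \<open>AE x in lborel. D x * \<nu> x = 0\<close> AE_lborel_singleton[of 0]
  proof eventually_elim
    case (elim x)
    show ?case
    proof (cases "\<bar>x\<bar> < \<rho>")
      case True
      hence "\<nu> x = 0" using Dpos[of x] elim by auto
      thus ?thesis by simp
    next
      case False
      hence "\<rho>\<^sup>2 \<le> x\<^sup>2" using rho by (intro sq_ge_of_abs) auto
      hence "min (\<rho>\<^sup>2) 1 \<le> min (x\<^sup>2) 1" by simp
      hence "1 \<le> M * min (x\<^sup>2) 1" unfolding M_def using m0 by (simp add: field_simps)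
      hence "\<nu> x \<le> M * (min (x\<^sup>2) 1 * \<nu> x)"
        using mult_right_mono[of 1 "M * min (x\<^sup>2) 1" "\<nu> x"] nonneg[of x] by (simp add: mult.assoc)
      thus ?thesis using M0 nonneg[of x] by (intro ennreal_le_mult_helper) auto
    qed
  qed
  hence "(\<integral>\<^sup>+ x. ennreal (\<nu> x) \<partial>lborel) \<le> (\<integral>\<^sup>+ x. ennreal M * ennreal (min (x\<^sup>2) 1 * \<nu> x) \<partial>lborel)"
    by (rule nn_integral_mono_AE)
  also have "\<dots> = ennreal M * (\<integral>\<^sup>+ x. ennreal (min (x\<^sup>2) 1 * \<nu> x) \<partial>lborel)"
    by (rule nn_integral_cmult) auto
  also have "\<dots> < \<infinity>" using fin by (simp add: ennreal_mult_less_top)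
  finally show False using inf by simp
qed

lemma h_strict:
  assumes inf: "(\<integral>\<^sup>+ x. ennreal (\<nu> x) \<partial>lborel) = \<infinity>"
  assumes r: "0 < r1" "r1 < r2" shows "levy_h \<nu> r2 < levy_h \<nu> r1"
proof (rule ccontr)
  assume "\<not> ?thesis"
  hence le: "levy_h \<nu> r1 \<le> levy_h \<nu> r2" by simp
  define D where "D x = min 1 (x\<^sup>2 / r1\<^sup>2) - min 1 (x\<^sup>2 / r2\<^sup>2)" for x
  have sq: "r1\<^sup>2 < r2\<^sup>2" using r by (intro power_strict_mono) auto
  have D0: "0 \<le> D x" for x
  proof -
    have "x\<^sup>2 / r2\<^sup>2 \<le> x\<^sup>2 / r1\<^sup>2" using sq r by (intro divide_left_mono) auto
    thus ?thesis unfolding D_def by simp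
  qed
  have Dpos: "0 < D x" if "x \<noteq> 0" "\<bar>x\<bar> < r2" for x
  proof -
    have "x\<^sup>2 / r2\<^sup>2 < x\<^sup>2 / r1\<^sup>2" using sq r that by (intro divide_strict_left_mono) auto
    moreover have "x\<^sup>2 / r2\<^sup>2 < 1" using sq_lt_of_abs[OF that(2)] r by simp
    ultimately show ?thesis unfolding D_def using min1_strict by simp
  qed
  have int: "integrable lborel (\<lambda>x. D x * \<nu> x)"
    unfolding D_def left_diff_distrib using r by (intro Bochner_Integration.integrable_diff int_h) auto
  have "(\<integral>x. D x * \<nu> x \<partial>lborel) = levy_h \<nu> r1 - levy_h \<nu> r2"
    unfolding D_def left_diff_distrib levy_h_def using r
    by (intro Bochner_Integration.integral_diff int_h) auto
  moreover have "(\<integral>x. D x * \<nu> x \<partial>lborel) \<ge> 0"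
    by (intro integral_nonneg_AE) (simp add: D0 nonneg)
  ultimately have "(\<integral>x. D x * \<nu> x \<partial>lborel) = 0" using le by simp
  moreover have Dm: "D \<in> borel_measurable borel" unfolding D_def by measurable
  ultimately show False using Z[OF inf Dm D0, where \<rho>=r2] Dpos int r by auto
qed

lemma h_mono: assumes "0 < r1" "r1 \<le> r2" shows "levy_h \<nu> r2 \<le> levy_h \<nu> r1"
  unfolding levy_h_def
proof (rule integral_mono[OF int_h int_h])
  fix x
  have sq: "r1\<^sup>2 \<le> r2\<^sup>2" using assms by (intro power_mono) auto
  have "x\<^sup>2 / r2\<^sup>2 \<le> x\<^sup>2 / r1\<^sup>2" using sq assms by (intro divide_left_mono) auto
  hence "min 1 (x\<^sup>2 / r2\<^sup>2) \<le> min 1 (x\<^sup>2 / r1\<^sup>2)" by simp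
  thus "min 1 (x\<^sup>2 / r2\<^sup>2) * \<nu> x \<le> min 1 (x\<^sup>2 / r1\<^sup>2) * \<nu> x"
    by (intro mult_right_mono nonneg)
qed (use assms in auto)

lemma h_scale: assumes "0 < r1" "r1 \<le> r2" shows "levy_h \<nu> r1 \<le> (r2/r1)\<^sup>2 * levy_h \<nu> r2"
proof -
  have c1: "1 \<le> (r2/r1)\<^sup>2" using assms by (simp add: field_simps power_mono)
  have "levy_h \<nu> r1 \<le> (\<integral>x. (r2/r1)\<^sup>2 * (min 1 (x\<^sup>2 / r2\<^sup>2) * \<nu> x) \<partial>lborel)"
    unfolding levy_h_def
  proof (rule integral_mono[OF int_h])
    show "integrable lborel (\<lambda>x. (r2/r1)\<^sup>2 * (min 1 (x\<^sup>2 / r2\<^sup>2) * \<nu> x))"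
      using assms by (intro integrable_mult_right int_h) auto
    fix x
    have "x\<^sup>2 / r1\<^sup>2 = (r2/r1)\<^sup>2 * (x\<^sup>2 / r2\<^sup>2)" using assms by (simp add: field_simps)
    hence "min 1 (x\<^sup>2 / r1\<^sup>2) \<le> max 1 ((r2/r1)\<^sup>2) * min (x\<^sup>2 / r2\<^sup>2) 1"
      by (simp only:) (rule min_scale, auto)
    also have "\<dots> = (r2/r1)\<^sup>2 * min 1 (x\<^sup>2 / r2\<^sup>2)" using c1 by (simp add: min.commute)
    finally have mm: "min 1 (x\<^sup>2 / r1\<^sup>2) \<le> (r2/r1)\<^sup>2 * min 1 (x\<^sup>2 / r2\<^sup>2)" .
    show "min 1 (x\<^sup>2 / r1\<^sup>2) * \<nu> x \<le> (r2/r1)\<^sup>2 * (min 1 (x\<^sup>2 / r2\<^sup>2) * \<nu> x)"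
      using mult_right_mono[OF mm nonneg[of x]] by (simp add: mult.assoc)
  qed (use assms in auto)
  also have "\<dots> = (r2/r1)\<^sup>2 * levy_h \<nu> r2" unfolding levy_h_def by simp
  finally show ?thesis .
qed

lemma h_cont: assumes "0 < r" shows "isCont (levy_h \<nu>) r"
proof -
  let ?lo = "\<lambda>s. min 1 ((r/s)\<^sup>2) * levy_h \<nu> r"
  let ?hi = "\<lambda>s. max 1 ((r/s)\<^sup>2) * levy_h \<nu> r"
  have b: "?lo s \<le> levy_h \<nu> s \<and> levy_h \<nu> s \<le> ?hi s" if "0 < s" for s
  proof (cases "s \<le> r")
    case True
    have "levy_h \<nu> s \<le> (r/s)\<^sup>2 * levy_h \<nu> r" by (rule h_scale) (use that True in auto)
    moreover have "levy_h \<nu> r \<le> levy_h \<nu> s" by (rule h_mono) (use that True in auto)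
    moreover have "min 1 ((r/s)\<^sup>2) = 1" "max 1 ((r/s)\<^sup>2) = (r/s)\<^sup>2"
      using True that by (auto simp: field_simps power_mono)
    ultimately show ?thesis by simp
  next
    case False
    have "levy_h \<nu> r \<le> (s/r)\<^sup>2 * levy_h \<nu> s" by (rule h_scale) (use assms False in auto)
    hence "(r/s)\<^sup>2 * levy_h \<nu> r \<le> (r/s)\<^sup>2 * ((s/r)\<^sup>2 * levy_h \<nu> s)"
      by (intro mult_left_mono) auto
    also have "\<dots> = levy_h \<nu> s" using assms that by (simp add: field_simps)
    finally have l: "(r/s)\<^sup>2 * levy_h \<nu> r \<le> levy_h \<nu> s" .
    moreover have "levy_h \<nu> s \<le> levy_h \<nu> r" by (rule h_mono) (use assms False in auto)
    moreover have "(r/s)\<^sup>2 \<le> 1" using False assms that by (simp add: field_simps power_le_one)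
    ultimately show ?thesis by (simp add: min_def max_def)
  qed
  have ev: "eventually (\<lambda>s. 0 < s) (at r)"
    using eventually_at_topological[of "\<lambda>s. 0 < s" r] assms
    by (metis eventually_at_right_real eventually_nhds_in_open greaterThan_iff open_greaterThan eventually_at_filter)
  have "(?lo \<longlongrightarrow> min 1 ((r/r)\<^sup>2) * levy_h \<nu> r) (at r)"
    using assms by (intro tendsto_intros) auto
  hence lo: "(?lo \<longlongrightarrow> levy_h \<nu> r) (at r)" using assms by simp
  have "(?hi \<longlongrightarrow> max 1 ((r/r)\<^sup>2) * levy_h \<nu> r) (at r)"
    using assms by (intro tendsto_intros) auto
  hence hi: "(?hi \<longlongrightarrow> levy_h \<nu> r) (at r)" using assms by simp
  have "(levy_h \<nu> \<longlongrightarrow> levy_h \<nu> r) (at r)"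
    by (rule tendsto_sandwich[OF _ _ lo hi]) (use ev b in \<open>auto elim: eventually_mono\<close>)
  thus ?thesis unfolding isCont_def .
qed

lemma psi_le_h: assumes "0 < \<xi>" shows "levy_exp \<nu> \<xi> \<le> 2 * levy_h \<nu> (1/\<xi>)"
proof -
  have "levy_exp \<nu> \<xi> \<le> (\<integral>x. 2 * (min 1 (x\<^sup>2 / (1/\<xi>)\<^sup>2) * \<nu> x) \<partial>lborel)"
    unfolding levy_exp_def
  proof (rule integral_mono[OF int_psi])
    show "integrable lborel (\<lambda>x. 2 * (min 1 (x\<^sup>2 / (1/\<xi>)\<^sup>2) * \<nu> x))"
      using assms by (intro integrable_mult_right int_h) auto
    fix x
    have "x\<^sup>2 / (1/\<xi>)\<^sup>2 = (\<xi>*x)\<^sup>2" using assms by (simp add: power_mult_distrib field_simps)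
    hence mm: "1 - cos (\<xi> * x) \<le> 2 * min 1 (x\<^sup>2 / (1/\<xi>)\<^sup>2)" using one_minus_cos_upper[of "\<xi>*x"] by simp
    show "(1 - cos (\<xi> * x)) * \<nu> x \<le> 2 * (min 1 (x\<^sup>2 / (1/\<xi>)\<^sup>2) * \<nu> x)"
      using mult_right_mono[OF mm nonneg[of x]] by (simp add: mult.assoc)
  qed
  also have "\<dots> = 2 * levy_h \<nu> (1/\<xi>)" unfolding levy_h_def by simp
  finally show ?thesis .
qed

lemma psi1_pos: assumes inf: "(\<integral>\<^sup>+ x. ennreal (\<nu> x) \<partial>lborel) = \<infinity>"
  shows "0 < levy_exp \<nu> 1"
proof (rule ccontr)
  assume "\<not> ?thesis"
  hence z: "levy_exp \<nu> 1 = 0" using psi_nonneg[of 1] by simp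
  have Dpos: "0 < 1 - cos x" if "x \<noteq> 0" "\<bar>x\<bar> < pi" for x :: real
  proof -
    have "cos \<bar>x\<bar> < cos 0" using that by (intro cos_monotone_0_pi) auto
    thus ?thesis by simp
  qed
  show False
    using Z[OF inf, of "\<lambda>x. 1 - cos x" pi] Dpos int_psi[of 1] z unfolding levy_exp_def by auto
qed

end


lemma powr_big: fixes z l \<alpha> :: real
  assumes "0 < \<alpha>" "0 \<le> z" "z powr (1/\<alpha>) \<le> l" shows "z \<le> l powr \<alpha>"
proof -
  have "(z powr (1/\<alpha>)) powr \<alpha> \<le> l powr \<alpha>" using assms by (intro powr_mono2) auto
  moreover have "(z powr (1/\<alpha>)) powr \<alpha> = z" using assms by (simp add: powr_powr)
  ultimately show ?thesis by simp
qed

context levy_scal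
begin

lemma h_inv:
  assumes inf: "(\<integral>\<^sup>+ x. ennreal (\<nu> x) \<partial>lborel) = \<infinity>" and y: "0 < y"
  shows "0 < levy_h_inv \<nu> y \<and> levy_h \<nu> (levy_h_inv \<nu> y) = y"
proof -
  define p where "p = levy_exp \<nu> 1"
  have p: "0 < p" unfolding p_def by (rule psi1_pos[OF inf])
  define l where "l = max 1 ((2*y/(Cl*p)) powr (1/\<alpha>))"
  have l1: "1 \<le> l" unfolding l_def by simp
  have "2*y/(Cl*p) \<le> l powr \<alpha>"
    by (rule powr_big) (use alpha y Cl p in \<open>auto simp: l_def\<close>)
  hence "2*y \<le> Cl * l powr \<alpha> * p" using Cl p by (simp add: field_simps)
  also have "\<dots> \<le> levy_exp \<nu> (l * 1)" unfolding p_def by (rule scal) (use l1 in auto)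
  finally have "2*y \<le> levy_exp \<nu> l" by simp
  also have "\<dots> \<le> 2 * levy_h \<nu> (1/l)" by (rule psi_le_h) (use l1 in auto)
  finally have ha: "y \<le> levy_h \<nu> (1/l)" by simp
  define m where "m = max 1 ((A*p/(Cl*y)) powr (1/\<alpha>))"
  have m1: "1 \<le> m" unfolding m_def by simp
  have mA: "A*p/(Cl*y) \<le> m powr \<alpha>"
    by (rule powr_big) (use alpha y Cl p A_pos in \<open>auto simp: m_def\<close>)
  have "Cl * m powr \<alpha> * levy_exp \<nu> (1/m) \<le> levy_exp \<nu> (m * (1/m))" by (rule scal) (use m1 in auto)
  hence s: "Cl * m powr \<alpha> * levy_exp \<nu> (1/m) \<le> p" using m1 unfolding p_def by simp
  have "levy_h \<nu> m = levy_h \<nu> (1/(1/m))" by simp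
  also have "\<dots> \<le> A * levy_exp \<nu> (1/m)" by (rule h_le_psi) (use m1 in auto)
  also have "\<dots> \<le> y"
  proof -
    have mp: "0 < m powr \<alpha>" using m1 by simp
    have "A * p \<le> Cl * y * m powr \<alpha>" using mA Cl y by (simp add: field_simps)
    hence "A * (Cl * m powr \<alpha> * levy_exp \<nu> (1/m)) \<le> Cl * y * m powr \<alpha>"
      using mult_left_mono[OF s, of A] A_pos by linarith
    hence "(Cl * m powr \<alpha>) * (A * levy_exp \<nu> (1/m)) \<le> (Cl * m powr \<alpha>) * y"
      by (simp add: algebra_simps)
    thus ?thesis using mp Cl by (simp add: mult_le_cancel_left_pos)
  qed
  finally have hb: "levy_h \<nu> m \<le> y" .
  have ab: "1/l \<le> m"
  proof (rule ccontr)
    assume "\<not> 1/l \<le> m"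
    hence "levy_h \<nu> (1/l) < levy_h \<nu> m" using m1 by (intro h_strict[OF inf]) auto
    thus False using ha hb by simp
  qed
  have "\<exists>x. 1/l \<le> x \<and> x \<le> m \<and> levy_h \<nu> x = y"
  proof (rule IVT2[OF hb ha ab])
    have "0 < 1/l" using l1 by simp
    thus "\<forall>x. 1/l \<le> x \<and> x \<le> m \<longrightarrow> isCont (levy_h \<nu>) x"
      using h_cont by (meson less_le_trans)
  qed
  then obtain r where r0: "1/l \<le> r" and r2: "levy_h \<nu> r = y" by blast
  have "0 < 1/l" using l1 by simp
  hence rpos: "0 < r" using r0 by (rule less_le_trans)
  note r = rpos r2
  have uniq: "r' = r" if "0 < r' \<and> levy_h \<nu> r' = y" for r'
  proof (cases r' r rule: linorder_cases)
    case less
    have "levy_h \<nu> r < levy_h \<nu> r'" using h_strict[OF inf, of r' r] that less by simp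
    thus ?thesis using that r(2) by simp
  next
    case greater
    have "levy_h \<nu> r' < levy_h \<nu> r" using h_strict[OF inf, of r r'] r(1) greater by simp
    thus ?thesis using that r(2) by simp
  qed
  have "levy_h_inv \<nu> y = r"
    unfolding levy_h_inv_def
  proof (rule the_equality)
    show "0 < r \<and> levy_h \<nu> r = y" using r by simp
    fix r' assume "0 < r' \<and> levy_h \<nu> r' = y"
    thus "r' = r" by (rule uniq)
  qed
  thus ?thesis using r by simp
qed

end


lemma trunc_meas:
  fixes m :: "real \<Rightarrow> real"
  assumes diff: "\<forall>x\<in>{0<..}. m differentiable at x" and sym: "\<forall>x. x \<noteq> 0 \<longrightarrow> m (- x) = m x"
  shows "m \<in> borel_measurable borel"
proof (rule borel_measurable_continuous_countable_exceptions[of "{0}"])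
  have cpos: "continuous_on {0<..} m"
    by (rule differentiable_imp_continuous_on, rule differentiable_at_imp_differentiable_on) (use diff in auto)
  have "continuous_on {..<0} (\<lambda>x. m (- x))"
    by (rule continuous_on_compose2[OF cpos]) (auto intro: continuous_intros)
  moreover have "\<And>x. x \<in> {..<0} \<Longrightarrow> m (- x) = m x" using sym by auto
  ultimately have cneg: "continuous_on {..<0} m"
    using continuous_on_cong[of "{..<0}" "{..<0}" "\<lambda>x. m (- x)" m] by auto
  have "continuous_on ({0<..} \<union> {..<0}) m"
    by (rule continuous_on_open_Un[OF _ _ cpos cneg]) auto
  moreover have "{0<..} \<union> {..<0} = - {0::real}" by auto
  ultimately show "continuous_on (- {0}) m" by simp
qed simp

context levy_base
begin

lemma trunc_facts:
  assumes tf: "truncation_family \<nu> \<delta>0 \<mu>" and d: "\<delta> \<in> {0<..\<delta>0}" and sym: "\<And>x. \<nu> (- x) = \<nu> x"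
  shows "\<mu> \<delta> \<in> borel_measurable borel"
    and "\<And>x. x \<noteq> 0 \<Longrightarrow> 0 \<le> \<mu> \<delta> x \<and> \<mu> \<delta> x \<le> \<nu> x"
    and "\<And>x. x \<noteq> 0 \<Longrightarrow> \<bar>x\<bar> \<le> \<delta> \<Longrightarrow> \<mu> \<delta> x = \<nu> x"
proof -
  have a: "\<forall>x\<in>{0<..\<delta>}. \<mu> \<delta> x = \<nu> x"
    and b: "\<forall>x\<in>{\<delta><..<2*\<delta>}. 0 \<le> \<mu> \<delta> x \<and> \<mu> \<delta> x \<le> \<nu> x"
    and c: "\<forall>x\<in>{2*\<delta>..}. \<mu> \<delta> x = 0"
    and df: "\<forall>x\<in>{0<..}. \<mu> \<delta> differentiable at x"
    and sm: "\<forall>x. x \<noteq> 0 \<longrightarrow> \<mu> \<delta> (- x) = \<mu> \<delta> x"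
    using tf d unfolding truncation_family_def by blast+
  show "\<mu> \<delta> \<in> borel_measurable borel" by (rule trunc_meas[OF df sm])
  have pos: "0 \<le> \<mu> \<delta> x \<and> \<mu> \<delta> x \<le> \<nu> x" if "0 < x" for x
  proof -
    consider "x \<le> \<delta>" | "\<delta> < x \<and> x < 2*\<delta>" | "2*\<delta> \<le> x" by linarith
    thus ?thesis
    proof cases
      case 1 thus ?thesis using a that nonneg[of x] by auto
    next
      case 2 thus ?thesis using b by auto
    next
      case 3 thus ?thesis using c nonneg[of x] by auto
    qed
  qed
  show "0 \<le> \<mu> \<delta> x \<and> \<mu> \<delta> x \<le> \<nu> x" if "x \<noteq> 0" for x
  proof (cases "0 < x")
    case True thus ?thesis by (rule pos)
  next
    case False
    hence nx: "0 < - x" using that by simp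
    have e1: "\<mu> \<delta> x = \<mu> \<delta> (-x)" using sm[rule_format, of "-x"] that by simp
    have e2: "\<nu> x = \<nu> (-x)" using sym[of "-x"] by simp
    show ?thesis unfolding e1 e2 by (rule pos[OF nx])
  qed
  show "\<mu> \<delta> x = \<nu> x" if "x \<noteq> 0" "\<bar>x\<bar> \<le> \<delta>" for x
  proof (cases "0 < x")
    case True thus ?thesis using a that by auto
  next
    case False
    hence nx: "-x \<in> {0<..\<delta>}" using that by auto
    have e1: "\<mu> \<delta> x = \<mu> \<delta> (-x)" using sm[rule_format, of "-x"] that by simp
    have e2: "\<nu> x = \<nu> (-x)" using sym[of "-x"] by simp
    show ?thesis unfolding e1 e2 using a nx by blast
  qed
qed

lemma trunc_psi:
  assumes tf: "truncation_family \<nu> \<delta>0 \<mu>" and d: "\<delta> \<in> {0<..\<delta>0}" and sym: "\<And>x. \<nu> (- x) = \<nu> x"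
  shows "levy_exp \<nu> \<xi> \<le> levy_exp (\<mu> \<delta>) \<xi> + 2 * levy_h \<nu> \<delta>"
    and "0 \<le> levy_exp (\<mu> \<delta>) \<xi>"
proof -
  note F = trunc_facts[OF tf d sym]
  have [measurable]: "\<mu> \<delta> \<in> borel_measurable borel" by (rule F(1))
  have d0: "0 < \<delta>" using d by simp
  have intm: "integrable lborel (\<lambda>x. (1 - cos (\<xi> * x)) * \<mu> \<delta> x)"
  proof (rule Bochner_Integration.integrable_bound[OF int_psi[of \<xi>]])
    show "(\<lambda>x. (1 - cos (\<xi> * x)) * \<mu> \<delta> x) \<in> borel_measurable lborel" by simp
    show "AE x in lborel. norm ((1 - cos (\<xi> * x)) * \<mu> \<delta> x) \<le> norm ((1 - cos (\<xi> * x)) * \<nu> x)"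
      using AE_lborel_singleton[of 0]
    proof eventually_elim
      case (elim x)
      have "0 \<le> 1 - cos (\<xi> * x)" by simp
      thus ?case using F(2)[OF elim] nonneg[of x] by (auto simp: abs_mult intro: mult_left_mono)
    qed
  qed
  show "0 \<le> levy_exp (\<mu> \<delta>) \<xi>"
    unfolding levy_exp_def
  proof (intro integral_nonneg_AE)
    show "AE x in lborel. 0 \<le> (1 - cos (\<xi> * x)) * \<mu> \<delta> x"
      using AE_lborel_singleton[of 0]
    proof eventually_elim
      case (elim x)
      thus ?case using F(2)[OF elim] by simp
    qed
  qed
  have "levy_exp \<nu> \<xi> \<le> (\<integral>x. (1 - cos (\<xi> * x)) * \<mu> \<delta> x + 2 * (min 1 (x\<^sup>2 / \<delta>\<^sup>2) * \<nu> x) \<partial>lborel)"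
    unfolding levy_exp_def
  proof (rule integral_mono[OF int_psi])
    show "integrable lborel (\<lambda>x. (1 - cos (\<xi> * x)) * \<mu> \<delta> x + 2 * (min 1 (x\<^sup>2 / \<delta>\<^sup>2) * \<nu> x))"
      using d0 by (intro Bochner_Integration.integrable_add intm integrable_mult_right int_h)
    fix x
    show "(1 - cos (\<xi> * x)) * \<nu> x \<le> (1 - cos (\<xi> * x)) * \<mu> \<delta> x + 2 * (min 1 (x\<^sup>2 / \<delta>\<^sup>2) * \<nu> x)"
    proof (cases "x = 0")
      case True thus ?thesis by simp
    next
      case x0: False
      have mm: "0 \<le> min 1 (x\<^sup>2 / \<delta>\<^sup>2) * \<nu> x" using nonneg[of x] by simp
      show ?thesis
      proof (cases "\<bar>x\<bar> \<le> \<delta>")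
        case True thus ?thesis using F(3)[OF x0 True] mm by simp
      next
        case False
        have "\<delta>\<^sup>2 \<le> x\<^sup>2" using False d0 by (intro sq_ge_of_abs) auto
        hence m1: "min 1 (x\<^sup>2 / \<delta>\<^sup>2) = 1" using d0 by (simp add: min_def field_simps)
        have c2: "1 - cos (\<xi> * x) \<le> 2" using cos_ge_minus_one[of "\<xi>*x"] by linarith
        have c0: "0 \<le> 1 - cos (\<xi> * x)" by simp
        have nm: "0 \<le> \<nu> x - \<mu> \<delta> x" "\<nu> x - \<mu> \<delta> x \<le> \<nu> x" using F(2)[OF x0] by auto
        have "(1 - cos (\<xi> * x)) * (\<nu> x - \<mu> \<delta> x) \<le> 2 * \<nu> x"
          using mult_mono[OF c2 nm(2) _ nm(1)] by simp
        thus ?thesis unfolding m1 by (simp add: algebra_simps)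
      qed
    qed
  qed
  also have "\<dots> = levy_exp (\<mu> \<delta>) \<xi> + 2 * levy_h \<nu> \<delta>"
    unfolding levy_exp_def levy_h_def using d0
    by (subst Bochner_Integration.integral_add) (auto intro: intm integrable_mult_right int_h)
  finally show "levy_exp \<nu> \<xi> \<le> levy_exp (\<mu> \<delta>) \<xi> + 2 * levy_h \<nu> \<delta>" .
qed

end


lemma exp_ge_pow: assumes "0 \<le> x" shows "x^m / fact m \<le> exp (x::real)"
proof -
  have s: "summable (\<lambda>n. x^n /\<^sub>R fact n)" by (rule summable_exp_generic)
  have "sum (\<lambda>n. x^n /\<^sub>R fact n) {m} \<le> (\<Sum>n. x^n /\<^sub>R fact n)"
    by (rule sum_le_suminf[OF s]) (use assms in auto)
  thus ?thesis by (simp add: exp_def divide_inverse mult.commute)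
qed

lemma decay_bound:
  fixes b \<alpha> :: real and n :: nat
  assumes b: "0 < b" and a: "0 < \<alpha>"
  shows "\<exists>C>0. \<forall>w\<ge>0. exp (-(b * w powr \<alpha>)) * (1 + w\<^sup>2)^n \<le> C"
proof -
  define m where "m = nat \<lceil>2 * real n / \<alpha>\<rceil>"
  have mge: "2 * real n \<le> real m * \<alpha>"
  proof -
    have "2 * real n / \<alpha> \<le> real m" unfolding m_def by linarith
    thus ?thesis using a by (simp add: field_simps)
  qed
  define C where "C = 2^n * max 1 (fact m / b^m)"
  have C0: "0 < C" unfolding C_def by simp
  have "exp (-(b * w powr \<alpha>)) * (1 + w\<^sup>2)^n \<le> C" if w0: "0 \<le> w" for w
  proof (cases "w \<le> 1")
    case True
    have e: "exp (-(b * w powr \<alpha>)) \<le> 1" using b w0 by simp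
    have "w\<^sup>2 \<le> 1" using True w0 by (simp add: power_le_one)
    hence p: "(1 + w\<^sup>2)^n \<le> 2^n" by (intro power_mono) auto
    have "exp (-(b * w powr \<alpha>)) * (1 + w\<^sup>2)^n \<le> 1 * 2^n"
      by (rule mult_mono[OF e p]) auto
    also have "\<dots> \<le> C" unfolding C_def by simp
    finally show ?thesis .
  next
    case False
    hence w1: "1 < w" by simp
    define E where "E = exp (-(b * w powr \<alpha>))"
    define y where "y = b * w powr \<alpha>"
    have y0: "0 < y" unfolding y_def using b w1 by simp
    have Ey: "E * exp y = 1" unfolding E_def y_def by (simp add: exp_minus)
    have E0: "0 < E" unfolding E_def by simp
    have "E * (y^m / fact m) \<le> E * exp y" using exp_ge_pow[of y m] y0 E0 by (intro mult_left_mono) auto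
    hence e1: "E * y^m \<le> fact m" using Ey by (simp add: field_simps)
    have ym: "y^m = b^m * w powr (real m * \<alpha>)"
      unfolding y_def power_mult_distrib using w1 by (simp add: powr_power)
    have "1 < w\<^sup>2" using less_1_mult[OF w1 w1] by (simp add: power2_eq_square)
    hence "1 + w\<^sup>2 \<le> 2 * w\<^sup>2" by simp
    hence "(1 + w\<^sup>2)^n \<le> (2 * w\<^sup>2)^n" by (intro power_mono) auto
    also have "\<dots> = 2^n * w powr (2 * real n)"
    proof -
      have "(2 * w\<^sup>2)^n = 2^n * w^(2*n)" by (simp add: power_mult_distrib power_mult)
      moreover have "w^(2*n) = w powr (real (2*n))" using w1 by (intro powr_realpow[symmetric]) simp
      ultimately show ?thesis by simp
    qed
    also have "\<dots> \<le> 2^n * w powr (real m * \<alpha>)"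
      using mge w1 by (intro mult_left_mono powr_mono) auto
    finally have P: "(1 + w\<^sup>2)^n \<le> 2^n * w powr (real m * \<alpha>)" .
    have "E * (1 + w\<^sup>2)^n \<le> E * (2^n * w powr (real m * \<alpha>))"
      using P E0 by (intro mult_left_mono) auto
    also have "\<dots> = 2^n * (E * w powr (real m * \<alpha>))" by simp
    also have "\<dots> \<le> 2^n * (fact m / b^m)"
    proof -
      have "b^m * (E * w powr (real m * \<alpha>)) \<le> fact m" using e1 ym by (simp add: algebra_simps)
      hence "E * w powr (real m * \<alpha>) \<le> fact m / b^m" using b by (simp add: field_simps)
      thus ?thesis by (intro mult_left_mono) auto
    qed
    also have "\<dots> \<le> C" unfolding C_def by (intro mult_left_mono) auto
    finally show ?thesis unfolding E_def .
  qed
  thus ?thesis using C0 by blast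
qed

lemma prod_basis_bound:
  fixes \<eta> :: "'a::euclidean_space"
  shows "(\<Prod>i\<in>Basis. 1 + (\<eta> \<bullet> i)\<^sup>2) \<le> (1 + (norm \<eta>)\<^sup>2) ^ DIM('a)"
proof -
  have "(\<Prod>i\<in>Basis. 1 + (\<eta> \<bullet> i)\<^sup>2) \<le> (\<Prod>i\<in>(Basis::'a set). 1 + (norm \<eta>)\<^sup>2)"
  proof (rule prod_mono)
    fix i :: 'a assume i: "i \<in> Basis"
    have "\<bar>\<eta> \<bullet> i\<bar> \<le> norm \<eta>" by (rule Basis_le_norm[OF i])
    hence "(\<eta> \<bullet> i)\<^sup>2 \<le> (norm \<eta>)\<^sup>2" by (metis abs_ge_zero power2_abs power_mono)
    thus "0 \<le> 1 + (\<eta> \<bullet> i)\<^sup>2 \<and> 1 + (\<eta> \<bullet> i)\<^sup>2 \<le> 1 + (norm \<eta>)\<^sup>2" by simp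
  qed
  thus ?thesis by simp
qed

lemma cauchy_half: "(\<integral>\<^sup>+ x. ennreal (1 / (1 + x\<^sup>2)) * indicator {0..} x \<partial>lborel) = ennreal (pi / 2)"
proof -
  have "(\<integral>\<^sup>+ x. ennreal (1 / (1 + x\<^sup>2)) * indicator {0..} x \<partial>lborel) = pi/2 - arctan 0"
    by (rule nn_integral_FTC_atLeast[where F=arctan])
       (auto intro: tendsto_arctan_at_top simp: inverse_eq_divide DERIV_arctan[unfolded inverse_eq_divide])
  thus ?thesis by simp
qed

lemma cauchy_fin: "(\<integral>\<^sup>+ x. ennreal (1 / (1 + x\<^sup>2)) \<partial>lborel) \<le> ennreal pi"
proof -
  let ?g = "\<lambda>x::real. ennreal (1 / (1 + x\<^sup>2)) * indicator {0..} x"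
  have "(\<integral>\<^sup>+ x. ennreal (1 / (1 + x\<^sup>2)) \<partial>lborel) \<le> (\<integral>\<^sup>+ x. ?g x + ?g (0 + (-1) * x) \<partial>lborel)"
    by (intro nn_integral_mono) (auto split: split_indicator)
  also have "\<dots> = (\<integral>\<^sup>+ x. ?g x \<partial>lborel) + (\<integral>\<^sup>+ x. ?g (0 + (-1) * x) \<partial>lborel)"
    by (rule nn_integral_add) auto
  also have "(\<integral>\<^sup>+ x. ?g (0 + (-1) * x) \<partial>lborel) = (\<integral>\<^sup>+ x. ?g x \<partial>lborel)"
    using nn_integral_real_affine[of ?g "-1" 0] by simp
  also have "(\<integral>\<^sup>+ x. ?g x \<partial>lborel) + (\<integral>\<^sup>+ x. ?g x \<partial>lborel) = ennreal pi"
    unfolding cauchy_half by (simp add: ennreal_plus[symmetric] del: ennreal_plus)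
  finally show ?thesis by simp
qed


lemma G_finite:
  fixes b \<alpha> :: real assumes b: "0 < b" and a: "0 < \<alpha>"
  shows "(\<integral>\<^sup>+ \<eta>. ennreal (exp (-(b * norm (\<eta>::'a::euclidean_space) powr \<alpha>))) \<partial>lborel) < \<infinity>"
proof -
  obtain C where C: "0 < C" "\<forall>w\<ge>0. exp (-(b * w powr \<alpha>)) * (1 + w\<^sup>2)^DIM('a) \<le> C"
    using decay_bound[OF b a] by blast
  have pw: "exp (-(b * norm \<eta> powr \<alpha>)) \<le> C * (\<Prod>i\<in>Basis. 1 / (1 + (\<eta> \<bullet> i)\<^sup>2))" for \<eta> :: 'a
  proof -
    let ?P = "\<Prod>i\<in>(Basis::'a set). 1 + (\<eta> \<bullet> i)\<^sup>2"
    have P0: "0 < ?P" by (intro prod_pos) (auto simp: add_pos_nonneg)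
    have "exp (-(b * norm \<eta> powr \<alpha>)) * ?P \<le> exp (-(b * norm \<eta> powr \<alpha>)) * (1 + (norm \<eta>)\<^sup>2)^DIM('a)"
      by (intro mult_left_mono prod_basis_bound) simp
    also have "\<dots> \<le> C" using C(2) by simp
    finally have "exp (-(b * norm \<eta> powr \<alpha>)) \<le> C / ?P" using P0 by (simp add: field_simps)
    also have "C / ?P = C * (\<Prod>i\<in>Basis. 1 / (1 + (\<eta> \<bullet> i)\<^sup>2))"
      by (simp add: prod_dividef)
    finally show ?thesis .
  qed
  define I where "I = (\<integral>\<^sup>+ x. ennreal (1 / (1 + x\<^sup>2)) \<partial>lborel)"
  have "(\<integral>\<^sup>+ \<eta>. ennreal (exp (-(b * norm (\<eta>::'a) powr \<alpha>))) \<partial>lborel)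
      \<le> (\<integral>\<^sup>+ \<eta>. ennreal C * (\<Prod>i\<in>Basis. ennreal (1 / (1 + ((\<eta>::'a) \<bullet> i)\<^sup>2))) \<partial>lborel)"
  proof (rule nn_integral_mono)
    fix \<eta> :: 'a
    have "(\<Prod>i\<in>Basis. ennreal (1 / (1 + (\<eta> \<bullet> i)\<^sup>2))) = ennreal (\<Prod>i\<in>Basis. 1 / (1 + (\<eta> \<bullet> i)\<^sup>2))"
      by (rule prod_ennreal) (simp add: add_pos_nonneg less_imp_le)
    moreover have "ennreal (C * (\<Prod>i\<in>Basis. 1 / (1 + (\<eta> \<bullet> i)\<^sup>2))) = ennreal C * ennreal (\<Prod>i\<in>Basis. 1 / (1 + (\<eta> \<bullet> i)\<^sup>2))"
      using C(1) by (intro ennreal_mult) (auto intro!: prod_nonneg simp: add_pos_nonneg less_imp_le)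
    ultimately show "ennreal (exp (-(b * norm \<eta> powr \<alpha>))) \<le> ennreal C * (\<Prod>i\<in>Basis. ennreal (1 / (1 + (\<eta> \<bullet> i)\<^sup>2)))"
      using ennreal_leI[OF pw[of \<eta>]] by simp
  qed
  also have "\<dots> = ennreal C * (\<integral>\<^sup>+ \<eta>. (\<Prod>i\<in>Basis. ennreal (1 / (1 + ((\<eta>::'a) \<bullet> i)\<^sup>2))) \<partial>lborel)"
    by (rule nn_integral_cmult) measurable
  also have "(\<integral>\<^sup>+ \<eta>. (\<Prod>i\<in>Basis. ennreal (1 / (1 + ((\<eta>::'a) \<bullet> i)\<^sup>2))) \<partial>lborel) = (\<Prod>i\<in>(Basis::'a set). I)"
    unfolding I_def by (rule nn_integral_lborel_prod[where f="\<lambda>_ x. ennreal (1 / (1 + x\<^sup>2))"]) auto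
  also have "\<dots> = I ^ DIM('a)" by simp
  also have "ennreal C * I ^ DIM('a) < \<infinity>"
  proof -
    have "I < \<infinity>" unfolding I_def using cauchy_fin by (simp add: le_less_trans)
    hence "I ^ DIM('a) < \<infinity>" by (simp add: power_less_top_ennreal)
    thus ?thesis by (simp add: ennreal_mult_less_top)
  qed
  finally show ?thesis .
qed



lemma nn_integral_scale:
  fixes G :: "'a::euclidean_space \<Rightarrow> ennreal"
  assumes [measurable]: "G \<in> borel_measurable borel" and r: "0 < r"
  shows "(\<integral>\<^sup>+ x. G (r *\<^sub>R x) \<partial>lborel) = ennreal (1 / r^DIM('a)) * (\<integral>\<^sup>+ x. G x \<partial>lborel)"
proof -
  have "(\<integral>\<^sup>+ x. G x \<partial>lborel) = ennreal (\<bar>r\<bar>^DIM('a)) * (\<integral>\<^sup>+ x. G (0 + r *\<^sub>R x) \<partial>lborel)"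
    using r by (subst lborel_affine[of r 0]) (simp_all add: nn_integral_density nn_integral_distr nn_integral_cmult)
  hence e: "(\<integral>\<^sup>+ x. G x \<partial>lborel) = ennreal (r^DIM('a)) * (\<integral>\<^sup>+ x. G (r *\<^sub>R x) \<partial>lborel)"
    using r by simp
  have "ennreal (1 / r^DIM('a)) * ennreal (r^DIM('a)) = 1"
    using r by (simp add: ennreal_mult[symmetric])
  thus ?thesis unfolding e by (simp add: mult.assoc[symmetric])
qed

lemma expo_arith:
  fixes P K w T :: real
  assumes "0 \<le> P" "K * w - K - 2 * T \<le> P" "0 \<le> T" "0 < K"
  shows "- P \<le> T + K - K / 2 * w"
proof (cases "K / 2 * w \<le> T + K")
  case True thus ?thesis using assms by linarith
next
  case False thus ?thesis using assms by (simp add: field_simps)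
qed

context levy_scal
begin

lemma main_bound:
  assumes inf: "(\<integral>\<^sup>+ x. ennreal (\<nu> x) \<partial>lborel) = \<infinity>" and sym: "\<And>x. \<nu> (- x) = \<nu> x"
    and tf: "truncation_family \<nu> \<delta>0 \<mu>" and d: "\<delta> \<in> {0<..\<delta>0}" and t: "0 < t"
  shows "(\<integral>\<^sup>+ \<xi>. ennreal (exp (- t * levy_exp (\<mu> \<delta>) (norm (\<xi> :: 'a::euclidean_space)))) \<partial>lborel)
    \<le> ennreal (exp (Cl / A) * enn2real (\<integral>\<^sup>+ \<eta>. ennreal (exp (-((Cl / A) / 2 * norm (\<eta>::'a) powr \<alpha>))) \<partial>lborel)
          * exp (levy_h \<nu> \<delta> * t) / (levy_h_inv \<nu> (1 / t)) ^ DIM('a))"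
proof -
  define K where "K = Cl / A"
  have K0: "0 < K" unfolding K_def using Cl A_pos by simp
  define H where "H = levy_h \<nu> \<delta>"
  have H0: "0 \<le> H" unfolding H_def by (rule h_nonneg)
  define r where "r = levy_h_inv \<nu> (1 / t)"
  have r: "0 < r" "levy_h \<nu> r = 1 / t" using h_inv[OF inf, of "1/t"] t unfolding r_def by auto
  define G where "G \<eta> = ennreal (exp (-(K / 2 * norm (\<eta>::'a) powr \<alpha>)))" for \<eta>
  have Gm[measurable]: "G \<in> borel_measurable borel" unfolding G_def by measurable
  have Gfin: "(\<integral>\<^sup>+ \<eta>. G \<eta> \<partial>lborel) < \<infinity>"
    unfolding G_def by (rule G_finite) (use K0 alpha in auto)
  have claim1: "K * (\<rho> * r) powr \<alpha> - K \<le> t * levy_exp \<nu> \<rho>" if \<rho>: "0 \<le> \<rho>" for \<rho>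
  proof (cases "1 \<le> \<rho> * r")
    case True
    have "levy_h \<nu> (1 / (1/r)) \<le> A * levy_exp \<nu> (1/r)" by (rule h_le_psi) (use r in auto)
    hence hr: "1 / t \<le> A * levy_exp \<nu> (1/r)" using r by simp
    have "Cl * (\<rho> * r) powr \<alpha> * levy_exp \<nu> (1/r) \<le> levy_exp \<nu> ((\<rho> * r) * (1/r))"
      by (rule scal) (use True r in auto)
    hence s: "Cl * (\<rho> * r) powr \<alpha> * levy_exp \<nu> (1/r) \<le> levy_exp \<nu> \<rho>" using r by simp
    have "K * (\<rho> * r) powr \<alpha> = Cl * (\<rho> * r) powr \<alpha> * (1 / A) " unfolding K_def by simp
    also have "\<dots> \<le> Cl * (\<rho> * r) powr \<alpha> * (t * levy_exp \<nu> (1/r))"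
    proof (intro mult_left_mono)
      show "1 / A \<le> t * levy_exp \<nu> (1/r)" using hr A_pos t by (simp add: field_simps)
    qed (use Cl in auto)
    also have "\<dots> = t * (Cl * (\<rho> * r) powr \<alpha> * levy_exp \<nu> (1/r))" by simp
    also have "\<dots> \<le> t * levy_exp \<nu> \<rho>" using s t by (intro mult_left_mono) auto
    finally show ?thesis using K0 by linarith
  next
    case False
    have "(\<rho> * r) powr \<alpha> \<le> 1 powr \<alpha>" using False \<rho> r alpha by (intro powr_mono2) auto
    hence "K * (\<rho> * r) powr \<alpha> \<le> K" using K0 by (simp add: mult_left_le)
    moreover have "0 \<le> t * levy_exp \<nu> \<rho>" using t psi_nonneg by simp
    ultimately show ?thesis by linarith
  qed
  have pw: "ennreal (exp (- t * levy_exp (\<mu> \<delta>) (norm \<xi>))) \<le> ennreal (exp (t * H) * exp K) * G (r *\<^sub>R \<xi>)" for \<xi> :: 'a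
  proof -
    define \<rho> where "\<rho> = norm \<xi>"
    have \<rho>0: "0 \<le> \<rho>" unfolding \<rho>_def by simp
    define P where "P = t * levy_exp (\<mu> \<delta>) \<rho>"
    have P0: "0 \<le> P" unfolding P_def using trunc_psi(2)[OF tf d sym] t by simp
    have "levy_exp \<nu> \<rho> \<le> levy_exp (\<mu> \<delta>) \<rho> + 2 * H" unfolding H_def by (rule trunc_psi(1)[OF tf d sym])
    hence "t * levy_exp \<nu> \<rho> \<le> P + 2 * (t * H)" unfolding P_def using t
      by (metis distrib_left mult.left_commute mult_le_cancel_left_pos)
    hence P1: "K * (\<rho> * r) powr \<alpha> - K - 2 * (t * H) \<le> P" using claim1[OF \<rho>0] by linarith
    have "- P \<le> t * H + K - K / 2 * (\<rho> * r) powr \<alpha>"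
      by (rule expo_arith[OF P0 P1]) (use t H0 K0 in auto)
    hence "exp (- P) \<le> exp (t * H + K - K / 2 * (\<rho> * r) powr \<alpha>)" by simp
    also have "\<dots> = exp (t * H) * exp K * exp (-(K / 2 * norm (r *\<^sub>R \<xi>) powr \<alpha>))"
      using r by (simp add: \<rho>_def exp_add[symmetric] exp_diff mult.commute)
    finally have "exp (- P) \<le> exp (t * H) * exp K * exp (-(K / 2 * norm (r *\<^sub>R \<xi>) powr \<alpha>))" .
    hence "ennreal (exp (- P)) \<le> ennreal (exp (t * H) * exp K) * ennreal (exp (-(K / 2 * norm (r *\<^sub>R \<xi>) powr \<alpha>)))"
      by (simp add: ennreal_mult[symmetric])
    thus ?thesis unfolding P_def \<rho>_def G_def by simp
  qed
  have "(\<integral>\<^sup>+ \<xi>. ennreal (exp (- t * levy_exp (\<mu> \<delta>) (norm (\<xi> :: 'a)))) \<partial>lborel)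
      \<le> (\<integral>\<^sup>+ \<xi>. ennreal (exp (t * H) * exp K) * G (r *\<^sub>R \<xi>) \<partial>lborel)"
    by (rule nn_integral_mono) (rule pw)
  also have "\<dots> = ennreal (exp (t * H) * exp K) * (\<integral>\<^sup>+ \<xi>. G (r *\<^sub>R \<xi>) \<partial>lborel)"
    by (rule nn_integral_cmult) measurable
  also have "\<dots> = ennreal (exp (t * H) * exp K) * (ennreal (1 / r^DIM('a)) * (\<integral>\<^sup>+ \<eta>. G \<eta> \<partial>lborel))"
    using nn_integral_scale[OF Gm r(1)] by simp
  also have "(\<integral>\<^sup>+ \<eta>. G \<eta> \<partial>lborel) = ennreal (enn2real (\<integral>\<^sup>+ \<eta>. G \<eta> \<partial>lborel))"
    using Gfin by simp
  also have "ennreal (exp (t * H) * exp K) * (ennreal (1 / r^DIM('a)) * ennreal (enn2real (\<integral>\<^sup>+ \<eta>. G \<eta> \<partial>lborel)))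
     = ennreal (exp K * enn2real (\<integral>\<^sup>+ \<eta>. G \<eta> \<partial>lborel) * exp (H * t) / r ^ DIM('a))"
    using r by (simp add: ennreal_mult[symmetric] mult_ac)
  finally show ?thesis unfolding K_def H_def r_def G_def .
qed

end


theorem lemma2p5:
  fixes \<alpha> C1 :: real
  shows "\<exists>c::real. \<forall>\<nu> \<eta>4 \<beta> Cu \<delta>0 \<mu>.
     std_levy_assms \<nu> \<eta>4 \<alpha> \<beta> (C1 * pi\<^sup>2) Cu \<and> truncation_family \<nu> \<delta>0 \<mu> \<longrightarrow>
     (\<forall>\<delta>\<in>{0<..\<delta>0}. \<forall>t>0.
        (\<integral>\<^sup>+ \<xi>. ennreal (exp (- t * levy_exp (\<mu> \<delta>) (norm (\<xi> :: real ^ 'n)))) \<partial>lborel)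
          \<le> ennreal (c * exp (levy_h \<nu> \<delta> * t) / (levy_h_inv \<nu> (1 / t)) ^ CARD('n)))"
proof -
  define Cl where "Cl = C1 * pi\<^sup>2"
  define A where "A = 16 / (Cl * (1 - 2 powr (-\<alpha>)))"
  define c where "c = exp (Cl / A) * enn2real (\<integral>\<^sup>+ \<eta>. ennreal (exp (-((Cl / A) / 2 * norm (\<eta>::real^'n) powr \<alpha>))) \<partial>lborel)"
  show ?thesis
  proof (rule exI[of _ c], intro allI impI)
    fix \<nu> :: "real \<Rightarrow> real" and \<eta>4 \<beta> Cu \<delta>0 :: real and \<mu> :: "real \<Rightarrow> real \<Rightarrow> real"
    assume H: "std_levy_assms \<nu> \<eta>4 \<alpha> \<beta> (C1 * pi\<^sup>2) Cu \<and> truncation_family \<nu> \<delta>0 \<mu>"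
    hence std: "std_levy_assms \<nu> \<eta>4 \<alpha> \<beta> Cl Cu" and tf: "truncation_family \<nu> \<delta>0 \<mu>"
      unfolding Cl_def by auto
    have meas: "\<nu> \<in> borel_measurable borel" and nn: "\<forall>x. 0 \<le> \<nu> x" and sym: "\<forall>x. \<nu> (- x) = \<nu> x"
      and fin: "(\<integral>\<^sup>+ x. ennreal (min (x\<^sup>2) 1 * \<nu> x) \<partial>lborel) < \<infinity>"
      and inf: "(\<integral>\<^sup>+ x. ennreal (\<nu> x) \<partial>lborel) = \<infinity>"
      and a0: "0 < \<alpha>" and Cl0: "0 < Cl"
      and scal: "\<forall>l \<theta>. 1 \<le> l \<longrightarrow> 0 \<le> \<theta> \<longrightarrow> levy_exp \<nu> (l * \<theta>) \<ge> Cl * l powr \<alpha> * levy_exp \<nu> \<theta>"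
      using std unfolding std_levy_assms_def by blast+
    interpret L: levy_scal \<nu> \<alpha> Cl
      by unfold_locales (use meas nn fin a0 Cl0 scal in auto)
    have LA: "L.A = A" unfolding L.A_def L.q_def A_def ..
    show "\<forall>\<delta>\<in>{0<..\<delta>0}. \<forall>t>0.
        (\<integral>\<^sup>+ \<xi>. ennreal (exp (- t * levy_exp (\<mu> \<delta>) (norm (\<xi> :: real ^ 'n)))) \<partial>lborel)
          \<le> ennreal (c * exp (levy_h \<nu> \<delta> * t) / (levy_h_inv \<nu> (1 / t)) ^ CARD('n))"
    proof (intro ballI allI impI)
      fix \<delta> t :: real assume d: "\<delta> \<in> {0<..\<delta>0}" and t: "0 < t"
      have "(\<integral>\<^sup>+ \<xi>. ennreal (exp (- t * levy_exp (\<mu> \<delta>) (norm (\<xi> :: real ^ 'n)))) \<partial>lborel)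
        \<le> ennreal (exp (Cl / L.A) * enn2real (\<integral>\<^sup>+ \<eta>. ennreal (exp (-((Cl / L.A) / 2 * norm (\<eta>::real^'n) powr \<alpha>))) \<partial>lborel)
          * exp (levy_h \<nu> \<delta> * t) / (levy_h_inv \<nu> (1 / t)) ^ DIM(real^'n))"
        by (rule L.main_bound[OF inf _ tf d t]) (use sym in auto)
      thus "(\<integral>\<^sup>+ \<xi>. ennreal (exp (- t * levy_exp (\<mu> \<delta>) (norm (\<xi> :: real ^ 'n)))) \<partial>lborel)
          \<le> ennreal (c * exp (levy_h \<nu> \<delta> * t) / (levy_h_inv \<nu> (1 / t)) ^ CARD('n))"
        unfolding LA c_def by simp
    qed
  qed
qed


end
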